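(* Let $T$ be a positive integer, let $N=(N_l)_{0\le l\le T}$ satisfy $N_0=0$ with increments $N_{l+1}-N_l$ independent Poisson random variables with parameters $\gamma_l\ge0$, let $\mathfrak{F}=(\mathfrak{F}_k)$ be the natural augmented filtration of $N$, $I_k=(-1)^{N_k}$ (so $I_0=1$), and $u_r=\frac12(1+e^{-2\gamma_{r-1}})$, $v_r=\frac12(1-e^{-2\gamma_{r-1}})$ for $1\le r\le T$. Define the events $$\Omega_{T+1,T+1}=\{I_0=1,\dots,I_T=1\},$$ $$\Omega_{l,T+1}=\{I_0=\dots=I_{l-1}=1,\ I_l=\dots=I_T=-1\},\ 1\le l\le T,$$ $$\Omega_{l,m}=\{I_0=\dots=I_{l-1}=1,\ I_l=\dots=I_{m-1}=-1,\ I_m=1\},\ 1\le l<m\le T,$$ and $\mathcal{I}=\{(l,m);1\le l<m\le T\}\cup\{(l,T+1);1\le l\le T+1\}$. Then for every $0\le k\le T$ and $(l,m)\in\mathcal{I}$, the conditional probabilities $\mathbb{Q}_k[\Omega_{\lambda,\mu}]=\mathbb{Q}[\Omega_{\lambda,\mu}\,|\,\mathfrak{F}_k]$, $(\lambda,\mu)\in\mathcal{I}$, are constant on $\Omega_{l,m}$, with values: for $1\le\lambda<\mu\le T$, $$\mathbb{Q}_k[\Omega_{\lambda,\mu}](\Omega_{l,m})=\Big(\mathbf{1}_{k<l\wedge\lambda}+\mathbf{1}_{k\ge l\wedge\lambda}\mathbf{1}_{l=\lambda}\big(\mathbf{1}_{k<m\wedge\mu}+\mathbf{1}_{k\ge m\wedge\mu}\mathbf{1}_{m=\mu}\big)\Big)\times\Big(\mathbf{1}_{k\ge\mu}+\mathbf{1}_{\lambda\le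 k<\mu}\Big(\prod_{r=k+1}^{\mu-1}u_r\Big)v_\mu+\mathbf{1}_{k<\lambda}\Big(\prod_{r=k+1}^{\lambda-1}u_r\Big)v_\lambda\Big(\prod_{r=\lambda+1}^{\mu-1}u_r\Big)v_\mu\Big);$$ for $1\le\lambda\le T$, $$\mathbb{Q}_k[\Omega_{\lambda,T+1}](\Omega_{l,m})=\big(\mathbf{1}_{k<l\wedge\lambda}+\mathbf{1}_{k\ge l\wedge\lambda}\mathbf{1}_{l=\lambda}\mathbf{1}_{k<m}\big)\times\Big(\mathbf{1}_{k\ge\lambda}\prod_{r=k+1}^{T}u_r+\mathbf{1}_{k<\lambda}\Big(\prod_{r=k+1}^{\lambda-1}u_r\Big)v_\lambda\Big(\prod_{r=\lambda+1}^{T}u_r\Big)\Big);$$ and $$\mathbb{Q}_k[\Omega_{T+1,T+1}](\Omega_{l,m})=\mathbf{1}_{k<l}\prod_{r=k+1}^{T}u_r.$$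
   Context: For a random variable constant on an event $A$, its value on $A$ is denoted by evaluation at $A$. *)

theory Defs
  imports "HOL-Probability.Probability" "HOL-Probability.Conditional_Expectation"
begin

text \<open>Poisson law with parameter g \<ge> 0 (g = 0 allowed: point mass at 0, since 0^0 = 1).\<close>
definition poisson_prob :: "real \<Rightarrow> nat \<Rightarrow> real" where
  "poisson_prob g j = g ^ j / fact j * exp (- g)"

definition nat_aug_filtration :: "'a measure \<Rightarrow> (nat \<Rightarrow> 'a \<Rightarrow> int) \<Rightarrow> nat \<Rightarrow> 'a measure" where
  "nat_aug_filtration M N k =
     sigma (space M) ((\<Union>j\<in>{0..k}. {N j -` A \<inter> space M | A. True}) \<union> null_sets M)"

definition u_coef :: "(nat \<Rightarrow> real) \<Rightarrow> nat \<Rightarrow> real" where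
  "u_coef \<gamma> r = (1 + exp (- 2 * \<gamma> (r - 1))) / 2"

definition v_coef :: "(nat \<Rightarrow> real) \<Rightarrow> nat \<Rightarrow> real" where
  "v_coef \<gamma> r = (1 - exp (- 2 * \<gamma> (r - 1))) / 2"

definition Omega_ev :: "'a set \<Rightarrow> (nat \<Rightarrow> 'a \<Rightarrow> real) \<Rightarrow> nat \<Rightarrow> nat \<Rightarrow> nat \<Rightarrow> 'a set" where
  "Omega_ev S I T l m =
    (if l = T + 1 \<and> m = T + 1 then {\<omega>\<in>S. \<forall>j\<le>T. I j \<omega> = 1}
     else if m = T + 1 then
       {\<omega>\<in>S. (\<forall>j<l. I j \<omega> = 1) \<and> (\<forall>j. l \<le> j \<and> j \<le> T \<longrightarrow> I j \<omega> = -1)}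
     else
       {\<omega>\<in>S. (\<forall>j<l. I j \<omega> = 1) \<and> (\<forall>j. l \<le> j \<and> j < m \<longrightarrow> I j \<omega> = -1) \<and> I m \<omega> = 1})"

definition index_set :: "nat \<Rightarrow> (nat \<times> nat) set" where
  "index_set T = {(l, m). 1 \<le> l \<and> l < m \<and> m \<le> T} \<union> {(l, m). 1 \<le> l \<and> l \<le> T + 1 \<and> m = T + 1}"

definition ind :: "bool \<Rightarrow> real" where
  "ind b = (if b then 1 else 0)"

end

theory Submission
  imports Defs
begin

definition pat :: "nat \<Rightarrow> nat \<Rightarrow> nat \<Rightarrow> real" where
  "pat a b j = (if j < a then 1 else if j < b then -1 else 1)"

lemma comb:
  assumes lm: "(l, m) \<in> index_set T" and ab: "(a, b) \<in> index_set T" and kT: "k \<le> T"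
    and J: "\<forall>j\<le>min m T. J j = pat l m j"
  shows "(\<forall>j\<le>min (min b T) k. J j = pat a b j) \<longleftrightarrow>
     (k < min l a \<or> (min l a \<le> k \<and> l = a \<and> (k < min m b \<or> (min m b \<le> k \<and> m = b))))"
proof
  assume H: "\<forall>j\<le>min (min b T) k. J j = pat a b j"
  have lm': "1 \<le> l" "l \<le> m" "l \<le> T \<Longrightarrow> l < m" "m \<le> T + 1" "m \<le> T \<Longrightarrow> l < m" "l = T + 1 \<Longrightarrow> m = T + 1"
    using lm by (auto simp: index_set_def)
  have ab': "1 \<le> a" "a \<le> b" "a \<le> T \<Longrightarrow> a < b" "b \<le> T + 1" "b \<le> T \<Longrightarrow> a < b" "a = T + 1 \<Longrightarrow> b = T + 1"
    using ab by (auto simp: index_set_def)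
  show "k < min l a \<or> (min l a \<le> k \<and> l = a \<and> (k < min m b \<or> (min m b \<le> k \<and> m = b)))"
  proof (cases "k < min l a")
    case True then show ?thesis by simp
  next
    case False
    have la: "l = a"
    proof (rule ccontr)
      assume "l \<noteq> a"
      then consider "l < a" | "a < l" by linarith
      then show False
      proof cases
        case 1
        then have "l \<le> k" using False by simp
        then have "J l = pat a b l" using H 1 ab' kT by auto
        moreover have "J l = pat l m l" using J lm' \<open>l \<le> k\<close> kT by auto
        ultimately show False using 1 lm' \<open>l \<le> k\<close> kT by (simp add: pat_def)
      next
        case 2
        then have "a \<le> k" using False by simp
        then have "J a = pat a b a" using H 2 ab' kT by auto
        moreover have "J a = pat l m a" using J lm' 2 \<open>a \<le> k\<close> kT by auto
        ultimately show False using 2 ab' \<open>a \<le> k\<close> kT by (simp add: pat_def)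
      qed
    qed
    show ?thesis
    proof (cases "k < min m b")
      case True then show ?thesis using la False by simp
    next
      case False2: False
      have "m = b"
      proof (rule ccontr)
        assume "m \<noteq> b"
        then consider "m < b" | "b < m" by linarith
        then show False
        proof cases
          case 1
          then have mk: "m \<le> k" using False2 by simp
          then have "J m = pat a b m" using H 1 ab' kT by auto
          moreover have "J m = pat l m m" using J mk kT by auto
          ultimately show False using 1 lm' ab' la mk kT by (simp add: pat_def)
        next
          case 2
          then have bk: "b \<le> k" using False2 by simp
          then have "J b = pat a b b" using H 2 ab' kT by auto
          moreover have "J b = pat l m b" using J 2 bk kT by auto
          ultimately show False using 2 lm' ab' la bk kT by (simp add: pat_def)
        qed
      qed
      then show ?thesis using la False False2 by simp
    qed
  qed
next
  assume H: "k < min l a \<or> (min l a \<le> k \<and> l = a \<and> (k < min m b \<or> (min m b \<le> k \<and> m = b)))"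
  have lm': "1 \<le> l" "l \<le> m" "l \<le> T \<Longrightarrow> l < m" "m \<le> T + 1" "m \<le> T \<Longrightarrow> l < m" "l = T + 1 \<Longrightarrow> m = T + 1"
    using lm by (auto simp: index_set_def)
  show "\<forall>j\<le>min (min b T) k. J j = pat a b j"
  proof (intro allI impI)
    fix j assume j: "j \<le> min (min b T) k"
    from H consider "k < min l a" | "l = a" "k < min m b" | "l = a" "m = b" by auto
    then show "J j = pat a b j"
    proof cases
      case 1
      then have "J j = pat l m j" using J j lm' by auto
      then show ?thesis using 1 j by (simp add: pat_def)
    next
      case 2
      then have "J j = pat l m j" using J j lm' by auto
      then show ?thesis using 2 j by (simp add: pat_def)
    next
      case 3
      then show ?thesis using J j by auto
    qed
  qed
qed

lemma prod_split3:
  fixes f :: "nat \<Rightarrow> real"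
  assumes "k < j" "j \<le> n"
  shows "(\<Prod>i\<in>{k+1..n}. f i) = (\<Prod>i\<in>{k+1..j-1}. f i) * f j * (\<Prod>i\<in>{j+1..n}. f i)"
proof -
  have "{k+1..n} = {k+1..j-1} \<union> ({j} \<union> {j+1..n})" using assms by auto
  then have "(\<Prod>i\<in>{k+1..n}. f i) = (\<Prod>i\<in>{k+1..j-1} \<union> ({j} \<union> {j+1..n}). f i)" by simp
  also have "\<dots> = (\<Prod>i\<in>{k+1..j-1}. f i) * (\<Prod>i\<in>{j} \<union> {j+1..n}. f i)"
    by (rule prod.union_disjoint) auto
  also have "(\<Prod>i\<in>{j} \<union> {j+1..n}. f i) = f j * (\<Prod>i\<in>{j+1..n}. f i)"
    by (subst prod.union_disjoint) auto
  finally show ?thesis by (simp add: mult.assoc)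
qed

lemma prod1:
  fixes u v :: "nat \<Rightarrow> real"
  assumes "1 \<le> a" "a < b"
  shows "(\<Prod>j\<in>{k+1..b}. if pat a b j = pat a b (j-1) then u j else v j) =
    ind (k \<ge> b) + ind (a \<le> k \<and> k < b) * (\<Prod>r\<in>{k+1..b-1}. u r) * v b
      + ind (k < a) * (\<Prod>r\<in>{k+1..a-1}. u r) * v a * (\<Prod>r\<in>{a+1..b-1}. u r) * v b"
proof -
  define f where "f j = (if pat a b j = pat a b (j-1) then u j else v j)" for j
  have fb: "f b = v b" using assms by (auto simp: f_def pat_def)
  have fa: "f a = v a" using assms by (simp add: f_def pat_def)
  consider "b \<le> k" | "a \<le> k" "k < b" | "k < a" by linarith
  then show ?thesis
  proof cases
    case 1 then show ?thesis using assms by (simp add: ind_def)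
  next
    case 2
    have "(\<Prod>j\<in>{k+1..b}. f j) = (\<Prod>j\<in>{k+1..b-1}. f j) * f b * (\<Prod>j\<in>{b+1..b}. f j)"
      using 2 by (intro prod_split3) auto
    also have "(\<Prod>j\<in>{k+1..b-1}. f j) = (\<Prod>j\<in>{k+1..b-1}. u j)"
      using 2 by (intro prod.cong) (auto simp: f_def pat_def)
    finally show ?thesis using 2 fb by (simp add: ind_def f_def)
  next
    case 3
    have "(\<Prod>j\<in>{k+1..b}. f j) = (\<Prod>j\<in>{k+1..b-1}. f j) * f b * (\<Prod>j\<in>{b+1..b}. f j)"
      using 3 assms by (intro prod_split3) auto
    also have "(\<Prod>j\<in>{k+1..b-1}. f j) = (\<Prod>j\<in>{k+1..a-1}. f j) * f a * (\<Prod>j\<in>{a+1..b-1}. f j)"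
      using 3 assms by (intro prod_split3) auto
    also have "(\<Prod>j\<in>{k+1..a-1}. f j) = (\<Prod>j\<in>{k+1..a-1}. u j)"
      using 3 by (intro prod.cong) (auto simp: f_def pat_def)
    also have "(\<Prod>j\<in>{a+1..b-1}. f j) = (\<Prod>j\<in>{a+1..b-1}. u j)"
      using 3 by (intro prod.cong) (auto simp: f_def pat_def)
    finally show ?thesis using 3 fb fa assms by (simp add: ind_def f_def)
  qed
qed

lemma prod2:
  fixes u v :: "nat \<Rightarrow> real"
  assumes "1 \<le> a" "a \<le> T" "k \<le> T"
  shows "(\<Prod>j\<in>{k+1..T}. if pat a (T+1) j = pat a (T+1) (j-1) then u j else v j) =
    ind (k \<ge> a) * (\<Prod>r\<in>{k+1..T}. u r)
      + ind (k < a) * (\<Prod>r\<in>{k+1..a-1}. u r) * v a * (\<Prod>r\<in>{a+1..T}. u r)"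
proof -
  define f where "f j = (if pat a (T+1) j = pat a (T+1) (j-1) then u j else v j)" for j
  have fa: "f a = v a" using assms by (simp add: f_def pat_def)
  consider "a \<le> k" | "k < a" by linarith
  then show ?thesis
  proof cases
    case 1
    have "(\<Prod>j\<in>{k+1..T}. f j) = (\<Prod>j\<in>{k+1..T}. u j)"
      using 1 by (intro prod.cong) (auto simp: f_def pat_def)
    then show ?thesis using 1 by (simp add: ind_def f_def)
  next
    case 2
    have "(\<Prod>j\<in>{k+1..T}. f j) = (\<Prod>j\<in>{k+1..a-1}. f j) * f a * (\<Prod>j\<in>{a+1..T}. f j)"
      using 2 assms by (intro prod_split3) auto
    also have "(\<Prod>j\<in>{k+1..a-1}. f j) = (\<Prod>j\<in>{k+1..a-1}. u j)"
      using 2 by (intro prod.cong) (auto simp: f_def pat_def)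
    also have "(\<Prod>j\<in>{a+1..T}. f j) = (\<Prod>j\<in>{a+1..T}. u j)"
      using 2 by (intro prod.cong) (auto simp: f_def pat_def)
    finally show ?thesis using 2 fa by (simp add: ind_def f_def)
  qed
qed

lemma prod3:
  fixes u v :: "nat \<Rightarrow> real"
  shows "(\<Prod>j\<in>{k+1..T}. if pat (T+1) (T+1) j = pat (T+1) (T+1) (j-1) then u j else v j) =
    (\<Prod>r\<in>{k+1..T}. u r)"
  by (intro prod.cong) (auto simp: pat_def)


lemma sg_eq: "(-1::real) powi (z::int) = (if even z then 1 else -1)"
  by (simp add: power_int_minus_left)

locale setting = prob_space M for M :: "'a measure" +
  fixes N :: "nat \<Rightarrow> 'a \<Rightarrow> int" and \<gamma> :: "nat \<Rightarrow> real" and T k :: nat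
    and D :: "nat \<Rightarrow> 'a \<Rightarrow> int" and I :: "nat \<Rightarrow> 'a \<Rightarrow> real"
  assumes Nmeas: "\<And>j. j \<le> T \<Longrightarrow> N j \<in> measurable M (count_space UNIV)"
    and N0: "\<And>\<omega>. \<omega> \<in> space M \<Longrightarrow> N 0 \<omega> = 0"
    and gpos: "\<And>j. j < T \<Longrightarrow> \<gamma> j \<ge> 0"
    and D_def: "D = (\<lambda>j \<omega>. N (Suc j) \<omega> - N j \<omega>)"
    and indep: "indep_vars (\<lambda>_. count_space UNIV) D {0..<T}"
    and pois: "\<And>j n. j < T \<Longrightarrow>
           measure M {\<omega> \<in> space M. D j \<omega> = int n} = poisson_prob (\<gamma> j) n"
    and I_def: "I = (\<lambda>j \<omega>. (-1::real) powi (N j \<omega>))"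
    and kT: "k \<le> T"
begin

lemma Dmeas: "i < T \<Longrightarrow> D i \<in> measurable M (count_space UNIV)"
  using indep unfolding indep_vars_def by auto

lemma Dset: "i < T \<Longrightarrow> {\<omega>\<in>space M. P (D i \<omega>)} \<in> sets M"
proof -
  assume "i < T"
  then have "{\<omega>\<in>space M. P (D i \<omega>)} = D i -` {z. P z} \<inter> space M" by auto
  also have "\<dots> \<in> sets M" using Dmeas[OF \<open>i<T\<close>] by (rule measurable_sets) simp
  finally show ?thesis .
qed

lemma prob_sign:
  assumes "i < T"
  shows "prob {\<omega>\<in>space M. (-1::real) powi D i \<omega> = 1} = u_coef \<gamma> (Suc i)"
    and "prob {\<omega>\<in>space M. (-1::real) powi D i \<omega> = -1} = v_coef \<gamma> (Suc i)"
proof -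
  define g where "g = \<gamma> i"
  define p where "p n = poisson_prob g n" for n
  define A where "A Q n = {\<omega>\<in>space M. D i \<omega> = int n \<and> Q n}" for Q n
  have sumQ: "(\<lambda>n. if Q n then p n else 0) sums prob {\<omega>\<in>space M. D i \<omega> \<ge> 0 \<and> Q (nat (D i \<omega>))}" for Q
  proof -
    have "(\<lambda>n. prob (A Q n)) sums prob (\<Union>n. A Q n)"
      by (rule finite_measure_UNION) (auto simp: A_def disjoint_family_on_def intro!: Dset assms)
    moreover have "prob (A Q n) = (if Q n then p n else 0)" for n
      using pois[OF assms, of n] by (auto simp: A_def p_def g_def)
    moreover have "(\<Union>n. A Q n) = {\<omega>\<in>space M. D i \<omega> \<ge> 0 \<and> Q (nat (D i \<omega>))}"
    proof (intro equalityI subsetI)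
      fix \<omega> assume "\<omega> \<in> (\<Union>n. A Q n)" then show "\<omega> \<in> {\<omega>\<in>space M. D i \<omega> \<ge> 0 \<and> Q (nat (D i \<omega>))}"
        by (auto simp: A_def)
    next
      fix \<omega> assume "\<omega> \<in> {\<omega>\<in>space M. D i \<omega> \<ge> 0 \<and> Q (nat (D i \<omega>))}"
      then have "\<omega> \<in> A Q (nat (D i \<omega>))" by (auto simp: A_def)
      then show "\<omega> \<in> (\<Union>n. A Q n)" by blast
    qed
    ultimately show ?thesis by simp
  qed
  have ps: "p sums 1"
  proof -
    have "(\<lambda>n. g^n /\<^sub>R fact n * exp (-g)) sums (exp g * exp (-g))"
      by (rule sums_mult2[OF exp_converges])
    moreover have "p = (\<lambda>n. g^n /\<^sub>R fact n * exp (-g))"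
      by (simp add: fun_eq_iff p_def poisson_prob_def divide_inverse ac_simps)
    moreover have "exp g * exp (-g) = 1" by (simp add: exp_minus_inverse)
    ultimately show ?thesis by simp
  qed
  have pa: "(\<lambda>n. (-1)^n * p n) sums (exp (-g) * exp (-g))"
  proof -
    have "(\<lambda>n. (-g)^n /\<^sub>R fact n * exp (-g)) sums (exp (-g) * exp (-g))"
      by (rule sums_mult2[OF exp_converges])
    moreover have "(-g)^n /\<^sub>R fact n * exp (-g) = (-1)^n * p n" for n
    proof -
      have "(-g)^n = (-1)^n * g^n" by (rule power_minus)
      then show ?thesis by (simp add: p_def poisson_prob_def divide_inverse)
    qed
    ultimately show ?thesis by simp
  qed
  define Ev where "Ev = prob {\<omega>\<in>space M. D i \<omega> \<ge> 0 \<and> even (nat (D i \<omega>))}"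
  define Od where "Od = prob {\<omega>\<in>space M. D i \<omega> \<ge> 0 \<and> \<not> even (nat (D i \<omega>))}"
  define Po where "Po = prob {\<omega>\<in>space M. D i \<omega> \<ge> 0 \<and> True}"
  have s1: "(\<lambda>n. if even n then p n else 0) sums Ev" unfolding Ev_def by (rule sumQ)
  have s2: "(\<lambda>n. if \<not> even n then p n else 0) sums Od" unfolding Od_def by (rule sumQ)
  have s3: "(\<lambda>n. if True then p n else 0) sums Po" unfolding Po_def by (rule sumQ)
  then have s3': "p sums Po" by simp
  have "Po = 1" by (rule sums_unique2[OF s3' ps])
  have "(\<lambda>n. (if even n then p n else 0) + (if \<not> even n then p n else 0)) sums (Ev + Od)"
    by (rule sums_add[OF s1 s2])
  moreover have "(\<lambda>n. (if even n then p n else 0) + (if \<not> even n then p n else 0)) = p"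
    by (rule ext) simp
  ultimately have EO1: "Ev + Od = 1" using ps by (metis sums_unique2)
  have "(\<lambda>n. (if even n then p n else 0) - (if \<not> even n then p n else 0)) sums (Ev - Od)"
    by (rule sums_diff[OF s1 s2])
  moreover have "(\<lambda>n. (if even n then p n else 0) - (if \<not> even n then p n else 0)) = (\<lambda>n. (-1)^n * p n)"
    by (rule ext) (simp add: minus_one_power_iff)
  ultimately have EO2: "Ev - Od = exp (-g) * exp (-g)" using pa by (metis sums_unique2)
  have ee: "exp (-g) * exp (-g) = exp (- 2 * g)"
  proof -
    have "exp (-g) * exp (-g) = exp (-g + -g)" by (rule exp_add[symmetric])
    also have "-g + -g = -2 * g" by simp
    finally show ?thesis .
  qed
  have neg: "{\<omega>\<in>space M. D i \<omega> < 0} \<in> null_sets M"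
  proof -
    have "prob {\<omega>\<in>space M. D i \<omega> < 0} = prob (space M - {\<omega>\<in>space M. D i \<omega> \<ge> 0 \<and> True})"
      by (intro arg_cong[where f=prob]) auto
    also have "\<dots> = 1 - Po" unfolding Po_def
      by (rule prob_compl) (rule Dset[OF assms])
    finally have "prob {\<omega>\<in>space M. D i \<omega> < 0} = 0" using \<open>Po = 1\<close> by simp
    then show ?thesis using Dset[OF assms, of "\<lambda>z. z < 0"]
      by (intro null_setsI) (simp_all add: emeasure_eq_measure)
  qed
  have "{\<omega>\<in>space M. (-1::real) powi D i \<omega> = 1} = {\<omega>\<in>space M. D i \<omega> \<ge> 0 \<and> even (nat (D i \<omega>))} \<union> 
     ({\<omega>\<in>space M. D i \<omega> < 0} \<inter> {\<omega>\<in>space M. (-1::real) powi D i \<omega> = 1})"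
    by (auto simp: sg_eq even_nat_iff)
  note that = this
  have "prob {\<omega>\<in>space M. (-1::real) powi D i \<omega> = 1} = Ev"
    unfolding Ev_def
    by (subst arg_cong[where f=prob, OF that]) (rule measure_Un_null_set[OF Dset[OF assms] null_set_Int2[OF neg Dset[OF assms]]])
  then show "prob {\<omega>\<in>space M. (-1::real) powi D i \<omega> = 1} = u_coef \<gamma> (Suc i)"
    using EO1 EO2 ee by (simp add: u_coef_def g_def)
  have "{\<omega>\<in>space M. (-1::real) powi D i \<omega> = -1} = {\<omega>\<in>space M. D i \<omega> \<ge> 0 \<and> \<not> even (nat (D i \<omega>))} \<union> 
     ({\<omega>\<in>space M. D i \<omega> < 0} \<inter> {\<omega>\<in>space M. (-1::real) powi D i \<omega> = -1})"
    by (auto simp: sg_eq even_nat_iff)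
  note that = this
  have "prob {\<omega>\<in>space M. (-1::real) powi D i \<omega> = -1} = Od"
    unfolding Od_def
    by (subst arg_cong[where f=prob, OF that]) (rule measure_Un_null_set[OF Dset[OF assms] null_set_Int2[OF neg Dset[OF assms]]])
  then show "prob {\<omega>\<in>space M. (-1::real) powi D i \<omega> = -1} = v_coef \<gamma> (Suc i)"
    using EO1 EO2 ee by (simp add: v_coef_def g_def)
qed

definition E where "E i = {D i -` A \<inter> space M | A. A \<in> sets (count_space UNIV)}"
definition Pa where "Pa = sigma_sets (space M) (\<Union>i\<in>{0..<k}. E i)"
definition Fu where "Fu = sigma_sets (space M) (\<Union>i\<in>{k..<T}. E i)"
definition F where "F = nat_aug_filtration M N k"
definition Ev where "Ev n c = {\<omega>\<in>space M. \<forall>j\<le>n. I j \<omega> = c j}"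

lemma E_sets: "i < T \<Longrightarrow> E i \<subseteq> sets M"
  unfolding E_def using Dmeas by (auto intro: measurable_sets)

lemma E_Pow: "E i \<subseteq> Pow (space M)"
  unfolding E_def by auto

lemma Pa_alg: "sigma_algebra (space M) Pa"
  unfolding Pa_def by (rule sigma_algebra_sigma_sets) (use E_Pow in blast)

lemma Pa_Int: "a \<in> Pa \<Longrightarrow> b \<in> Pa \<Longrightarrow> a \<inter> b \<in> Pa"
proof -
  interpret Pa: sigma_algebra "space M" Pa by (rule Pa_alg)
  show "a \<in> Pa \<Longrightarrow> b \<in> Pa \<Longrightarrow> a \<inter> b \<in> Pa" by (rule Pa.Int)
qed

lemma Fu_alg: "sigma_algebra (space M) Fu"
  unfolding Fu_def by (rule sigma_algebra_sigma_sets) (use E_Pow in blast)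

lemma Pa_sets: "Pa \<subseteq> sets M"
  unfolding Pa_def by (intro sets.sigma_sets_subset UN_least E_sets) (use kT in auto)

lemma Fu_sets: "Fu \<subseteq> sets M"
  unfolding Fu_def by (intro sets.sigma_sets_subset UN_least E_sets) auto

lemma indep_PaFu:
  assumes "a \<in> Pa" "b \<in> Fu" shows "prob (a \<inter> b) = prob a * prob b"
proof -
  have "indep_sets E {0..<T}" using indep unfolding indep_vars_def2 E_def by auto
  moreover have U: "(\<Union>j\<in>UNIV. case_bool {0..<k} {k..<T} j) = {0..<T}"
    using kT by (auto simp: UNIV_bool)
  ultimately have "indep_sets E (\<Union>j\<in>UNIV. case_bool {0..<k} {k..<T} j)" by simp
  then have "indep_sets (\<lambda>j. sigma_sets (space M) (\<Union>i\<in>case_bool {0..<k} {k..<T} j. E i)) UNIV"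
  proof (rule indep_sets_collect_sigma)
    fix i j
    show "Int_stable (E i)"
      unfolding E_def Int_stable_def
      apply auto
      apply (rule_tac x="A \<inter> Aa" in exI)
      apply auto
      done
  next
    show "disjoint_family_on (case_bool {0..<k} {k..<T}) UNIV"
      by (auto simp: disjoint_family_on_def split: bool.split)
  qed
  moreover have "(\<lambda>j. sigma_sets (space M) (\<Union>i\<in>case_bool {0..<k} {k..<T} j. E i)) = case_bool Pa Fu"
    by (auto simp: fun_eq_iff Pa_def Fu_def split: bool.split)
  ultimately have "indep_set Pa Fu" unfolding indep_set_def by simp
  then show ?thesis using assms unfolding indep_sets2_eq by blast
qed

lemma N_Pa_meas:
  assumes "j \<le> k"
  shows "N j \<in> measurable (sigma (space M) (\<Union>i\<in>{0..<k}. E i)) (count_space UNIV)"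
  using assms
proof (induction j)
  case 0
  have "(\<lambda>_. 0::int) \<in> measurable (sigma (space M) (\<Union>i\<in>{0..<k}. E i)) (count_space UNIV)"
    by simp
  then show ?case
    by (subst measurable_cong[where g="\<lambda>_. 0"]) (auto simp: N0 space_measure_of_conv)
next
  case (Suc j)
  then have jk: "j < k" by simp
  have Dm: "D j \<in> measurable (sigma (space M) (\<Union>i\<in>{0..<k}. E i)) (count_space UNIV)"
  proof (rule measurableI)
    fix x assume "x \<in> space (sigma (space M) (\<Union>i\<in>{0..<k}. E i))"
    show "D j x \<in> space (count_space UNIV)" by simp
  next
    fix A :: "int set" assume "A \<in> sets (count_space UNIV)"
    have "D j -` A \<inter> space M \<in> E j" unfolding E_def by auto
    then have "D j -` A \<inter> space M \<in> sigma_sets (space M) (\<Union>i\<in>{0..<k}. E i)"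
      using jk by (intro sigma_sets.Basic) auto
    then show "D j -` A \<inter> space (sigma (space M) (\<Union>i\<in>{0..<k}. E i))
          \<in> sets (sigma (space M) (\<Union>i\<in>{0..<k}. E i))"
      using E_Pow by (subst sets_measure_of) (auto simp: space_measure_of_conv)
  qed
  have "(\<lambda>\<omega>. (\<lambda>i \<omega>. N j \<omega> + i) (D j \<omega>) \<omega>) \<in> measurable (sigma (space M) (\<Union>i\<in>{0..<k}. E i)) (count_space UNIV)"
  proof (rule measurable_compose_countable[OF _ Dm])
    fix i :: int
    show "(\<lambda>\<omega>. N j \<omega> + i) \<in> measurable (sigma (space M) (\<Union>i\<in>{0..<k}. E i)) (count_space UNIV)"
      using Suc.IH jk by (intro measurable_compose[where g="\<lambda>z. z + i", OF _ measurable_count_space]) auto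
  qed
  moreover have "(\<lambda>\<omega>. (\<lambda>i \<omega>. N j \<omega> + i) (D j \<omega>) \<omega>) = N (Suc j)"
    by (simp add: D_def fun_eq_iff)
  ultimately show ?case by simp
qed

lemma N_Pa: "j \<le> k \<Longrightarrow> N j -` A \<inter> space M \<in> Pa"
proof -
  assume jk: "j \<le> k"
  have "sets (sigma (space M) (\<Union>i\<in>{0..<k}. E i)) = sigma_sets (space M) (\<Union>i\<in>{0..<k}. E i)"
    by (rule sets_measure_of) (use E_Pow in blast)
  with measurable_sets[OF N_Pa_meas[OF jk], of A]
  show ?thesis unfolding Pa_def
    by (simp add: space_measure_of_conv)
qed

definition G0 where "G0 = (\<Union>j\<in>{0..k}. {N j -` A \<inter> space M | A. True}) \<union> null_sets M"

lemma G0_sets: "G0 \<subseteq> sets M"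
  unfolding G0_def using Nmeas kT by (auto intro: measurable_sets)

lemma sets_F: "sets F = sigma_sets (space M) G0" and space_F: "space F = space M"
  using G0_sets sets.sets_into_space
  unfolding F_def nat_aug_filtration_def G0_def[symmetric]
  by (auto simp: sets_measure_of space_measure_of_conv intro!: sets_measure_of)

lemma subalg: "subalgebra M F"
  unfolding subalgebra_def using sets_F space_F G0_sets
  by (simp add: sets.sigma_sets_subset)

lemma sfs: "sigma_finite_subalgebra M F"
  by (rule finite_measure_subalgebra_is_sigma_finite)
    (simp add: finite_measure_subalgebra_def finite_measure_subalgebra_axioms_def finite_measure_axioms subalg)

lemma F_sub: "sets F \<subseteq> sigma_sets (space M) (Pa \<union> null_sets M)"
  unfolding sets_F
proof (rule sigma_sets_mono)
  show "G0 \<subseteq> sigma_sets (space M) (Pa \<union> null_sets M)"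
    unfolding G0_def using N_Pa by (auto intro: sigma_sets.Basic)
qed

lemma Ev_INT: "Ev m c = (\<Inter>j\<in>{..m}. N j -` {z. (-1::real) powi z = c j} \<inter> space M)"
  unfolding Ev_def by (auto simp: I_def)

lemma Ev_Pa: "m \<le> k \<Longrightarrow> Ev m c \<in> Pa"
proof -
  assume "m \<le> k"
  interpret Pa: sigma_algebra "space M" Pa by (rule Pa_alg)
  show ?thesis
    unfolding Ev_INT
  proof (rule Pa.finite_INT)
    fix j assume "j \<in> {..m}"
    then show "N j -` {z. (-1::real) powi z = c j} \<inter> space M \<in> Pa"
      using \<open>m \<le> k\<close> by (intro N_Pa) auto
  qed auto
qed

lemma Ev_F: "m \<le> k \<Longrightarrow> Ev m c \<in> sets F"
  unfolding Ev_INT sets_F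
proof (rule sets.finite_INT[where M=F, unfolded sets_F])
  fix j assume "j \<in> {..m}" "m \<le> k"
  then show "N j -` {z. (-1::real) powi z = c j} \<inter> space M \<in> sigma_sets (space M) G0"
    unfolding G0_def by (intro sigma_sets.Basic UnI1 UN_I[of j]) (auto intro!: exI[of _ "{z. (-1::real) powi z = c j}"])
qed auto

lemma Ev_sets: "m \<le> T \<Longrightarrow> Ev m c \<in> sets M"
  unfolding Ev_INT using Nmeas by (intro sets.finite_INT) (auto intro: measurable_sets)

lemma I_Suc: "I (Suc j) \<omega> = I j \<omega> * (-1) powi D j \<omega>"
  by (simp add: I_def D_def sg_eq even_diff even_add)


lemma condA:
  assumes nT: "n \<le> T" and c: "\<And>j. j \<le> n \<Longrightarrow> c j = 1 \<or> c j = -1"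
  shows "AE \<omega> in M. real_cond_exp M F (indicator (Ev n c)) \<omega> =
     indicator (Ev (min n k) c) \<omega> * (\<Prod>j\<in>{k+1..n}. if c j = c (j-1) then u_coef \<gamma> j else v_coef \<gamma> j)"
proof -
  define e where "e i = (if c (Suc i) = c i then 1 else -1::real)" for i
  define R where "R = {\<omega>\<in>space M. \<forall>i\<in>{k..<n}. (-1::real) powi D i \<omega> = e i}"
  define S where "S = Ev n c"
  define S' where "S' = Ev (min n k) c"
  define K where "K = (\<Prod>j\<in>{k+1..n}. if c j = c (j-1) then u_coef \<gamma> j else v_coef \<gamma> j)"
  have sg1: "(-1::real) powi z = 1 \<or> (-1::real) powi z = -1" for z by (simp add: sg_eq)
  have SR: "S = S' \<inter> R"
  proof (intro equalityI subsetI)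
    fix \<omega> assume "\<omega> \<in> S"
    then have sp: "\<omega> \<in> space M" and h: "\<And>j. j \<le> n \<Longrightarrow> I j \<omega> = c j" by (auto simp: S_def Ev_def)
    have "(-1::real) powi D i \<omega> = e i" if "i \<in> {k..<n}" for i
    proof -
      have "c (Suc i) = c i * (-1::real) powi D i \<omega>"
        using h[of "Suc i"] h[of i] that I_Suc[of i \<omega>] by simp
      then show ?thesis using c[of i] c[of "Suc i"] sg1[of "D i \<omega>"] that unfolding e_def by auto
    qed
    then show "\<omega> \<in> S' \<inter> R" using sp h by (auto simp: S'_def Ev_def R_def)
  next
    fix \<omega> assume "\<omega> \<in> S' \<inter> R"
    then have sp: "\<omega> \<in> space M" and h: "\<And>j. j \<le> min n k \<Longrightarrow> I j \<omega> = c j"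
      and r: "\<And>i. i \<in> {k..<n} \<Longrightarrow> (-1::real) powi D i \<omega> = e i"
      by (auto simp: S'_def Ev_def R_def)
    have "j \<le> n \<longrightarrow> I j \<omega> = c j" for j
    proof (induction j)
      case 0 then show ?case using h[of 0] by simp
    next
      case (Suc j)
      show ?case
      proof
        assume j: "Suc j \<le> n"
        show "I (Suc j) \<omega> = c (Suc j)"
        proof (cases "Suc j \<le> k")
          case True then show ?thesis using h[of "Suc j"] j by simp
        next
          case False
          then have "j \<in> {k..<n}" using j by auto
          then have "I (Suc j) \<omega> = c j * e j" using I_Suc[of j \<omega>] r[of j] Suc.IH j by simp
          then show ?thesis using c[of j] c[of "Suc j"] j unfolding e_def by auto
        qed
      qed
    qed
    then show "\<omega> \<in> S" using sp by (auto simp: S_def Ev_def)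
  qed
  have R_Fu: "R \<in> Fu"
  proof (cases "k < n")
    case False
    then have "R = space M" by (auto simp: R_def)
    then show ?thesis unfolding Fu_def by (simp add: sigma_sets_top)
  next
    case True
    interpret Fu: sigma_algebra "space M" Fu by (rule Fu_alg)
    have "R = (\<Inter>i\<in>{k..<n}. D i -` {z. (-1::real) powi z = e i} \<inter> space M)"
      using True by (auto simp: R_def)
    also have "\<dots> \<in> Fu"
    proof (rule Fu.finite_INT)
      fix i assume "i \<in> {k..<n}"
      then have "D i -` {z. (-1::real) powi z = e i} \<inter> space M \<in> E i" unfolding E_def
        by (auto intro!: exI[of _ "{z. (-1::real) powi z = e i}"])
      then show "D i -` {z. (-1::real) powi z = e i} \<inter> space M \<in> Fu"
        unfolding Fu_def using \<open>i \<in> {k..<n}\<close> nT by (intro sigma_sets.Basic UN_I[of i]) auto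
    qed (use True in auto)
    finally show ?thesis .
  qed
  have probR: "prob R = K"
  proof (cases "k < n")
    case False
    then have "R = space M" by (auto simp: R_def)
    then show ?thesis using False by (simp add: K_def prob_space)
  next
    case True
    have "R = (\<Inter>i\<in>{k..<n}. D i -` {z. (-1::real) powi z = e i} \<inter> space M)"
      using True by (auto simp: R_def)
    moreover have "prob (\<Inter>i\<in>{k..<n}. D i -` {z. (-1::real) powi z = e i} \<inter> space M) = (\<Prod>i\<in>{k..<n}. prob (D i -` {z. (-1::real) powi z = e i} \<inter> space M))"
      by (rule indep_varsD[OF indep, of "{k..<n}" "\<lambda>i. {z. (-1::real) powi z = e i}"]) (use True nT in auto)
    ultimately have "prob R = (\<Prod>i\<in>{k..<n}. prob (D i -` {z. (-1::real) powi z = e i} \<inter> space M))"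
      by simp
    also have "\<dots> = (\<Prod>i\<in>{k..<n}. if c (Suc i) = c i then u_coef \<gamma> (Suc i) else v_coef \<gamma> (Suc i))"
    proof (rule prod.cong[OF refl])
      fix i assume i: "i \<in> {k..<n}"
      then have iT: "i < T" using nT by auto
      have eq: "D i -` {z. (-1::real) powi z = e i} \<inter> space M = {\<omega>\<in>space M. (-1::real) powi D i \<omega> = e i}"
        by auto
      show "prob (D i -` {z. (-1::real) powi z = e i} \<inter> space M) = (if c (Suc i) = c i then u_coef \<gamma> (Suc i) else v_coef \<gamma> (Suc i))"
        unfolding eq using prob_sign[OF iT] by (simp add: e_def)
    qed
    also have "\<dots> = K" unfolding K_def
      by (rule prod.reindex_bij_witness[where i="\<lambda>j. j - 1" and j="\<lambda>i. Suc i"]) auto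
    finally show ?thesis .
  qed
  have S'Pa: "S' \<in> Pa" unfolding S'_def by (rule Ev_Pa) simp
  have S'F: "S' \<in> sets F" unfolding S'_def by (rule Ev_F) simp
  have S_sets: "S \<in> sets M" unfolding S_def using nT by (rule Ev_sets)
  have S'_sets: "S' \<in> sets M" unfolding S'_def using nT kT by (intro Ev_sets) simp
  have Pa_space: "space M \<in> Pa" unfolding Pa_def by (rule sigma_sets_top)
  have basic: "prob (A \<inter> S) = prob (A \<inter> S') * K" if A: "A \<in> Pa" for A
  proof -
    have "A \<inter> S = (A \<inter> S') \<inter> R" using SR by auto
    moreover have "A \<inter> S' \<in> Pa" using A S'Pa by (rule Pa_Int)
    ultimately show ?thesis using indep_PaFu[OF _ R_Fu] probR by simp
  qed
  define G where "G = Pa \<union> null_sets M"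
  have G_sets: "G \<subseteq> sets M" using Pa_sets by (auto simp: G_def)
  have Gst: "Int_stable G" unfolding Int_stable_def G_def
  proof (intro ballI)
    fix a b assume a: "a \<in> Pa \<union> null_sets M" and b: "b \<in> Pa \<union> null_sets M"
    show "a \<inter> b \<in> Pa \<union> null_sets M"
    proof (cases "a \<in> Pa")
      case True
      show ?thesis
      proof (cases "b \<in> Pa")
        case True then show ?thesis using \<open>a \<in> Pa\<close> Pa_Int by blast
      next
        case False then have "b \<in> null_sets M" using b by auto
        then show ?thesis using True Pa_sets null_set_Int1 by blast
      qed
    next
      case False then have "a \<in> null_sets M" using a by auto
      then show ?thesis using b Pa_sets null_set_Int2 by blast
    qed
  qed
  have Gpow: "G \<subseteq> Pow (space M)" using G_sets sets.sets_into_space by blast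
  have main: "prob (A \<inter> S) = prob (A \<inter> S') * K" if A: "A \<in> sigma_sets (space M) G" for A
  proof (rule sigma_sets_induct_disjoint[OF Gst Gpow A, where P="\<lambda>A. prob (A \<inter> S) = prob (A \<inter> S') * K"])
    fix A assume "A \<in> G"
    then show "prob (A \<inter> S) = prob (A \<inter> S') * K"
    proof (cases "A \<in> Pa")
      case True then show ?thesis by (rule basic)
    next
      case False then have "A \<in> null_sets M" using \<open>A \<in> G\<close> by (auto simp: G_def)
      then have "A \<inter> S \<in> null_sets M" "A \<inter> S' \<in> null_sets M"
        using S_sets S'_sets null_set_Int2 by blast+
      then show ?thesis by (simp add: measure_def null_setsD1)
    qed
  next
    show "prob ({} \<inter> S) = prob ({} \<inter> S') * K" by simp
  next
    fix A assume A: "A \<in> sigma_sets (space M) G" and IH: "prob (A \<inter> S) = prob (A \<inter> S') * K"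
    have As: "A \<in> sets M" using A G_sets sets.sigma_sets_subset by blast
    have e1: "(space M - A) \<inter> S = S - (A \<inter> S)" using S_sets sets.sets_into_space by blast
    have e2: "(space M - A) \<inter> S' = S' - (A \<inter> S')" using S'_sets sets.sets_into_space by blast
    have d1: "prob (S - (A \<inter> S)) = prob S - prob (A \<inter> S)"
      using As S_sets by (intro finite_measure_Diff) auto
    have d2: "prob (S' - (A \<inter> S')) = prob S' - prob (A \<inter> S')"
      using As S'_sets by (intro finite_measure_Diff) auto
    have pS: "prob S = prob S' * K" using basic[OF Pa_space] S_sets S'_sets sets.sets_into_space
      by (simp add: Int_absorb1)
    have "prob ((space M - A) \<inter> S) = prob S - prob (A \<inter> S)" using e1 d1 by simp
    also have "\<dots> = prob S' * K - prob (A \<inter> S') * K" using pS IH by simp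
    also have "\<dots> = (prob S' - prob (A \<inter> S')) * K" by (simp add: left_diff_distrib)
    also have "\<dots> = prob ((space M - A) \<inter> S') * K" using e2 d2 by simp
    finally show "prob ((space M - A) \<inter> S) = prob ((space M - A) \<inter> S') * K" .
  next
    fix A :: "nat \<Rightarrow> 'a set"
    assume disj: "disjoint_family A" and rA: "range A \<subseteq> sigma_sets (space M) G"
      and IH: "\<And>i. prob (A i \<inter> S) = prob (A i \<inter> S') * K"
    have As: "A i \<in> sets M" for i using rA G_sets sets.sigma_sets_subset by blast
    have d1: "disjoint_family (\<lambda>i. A i \<inter> X)" for X
      using disj unfolding disjoint_family_on_def by blast
    have "(\<lambda>i. prob (A i \<inter> S)) sums prob (\<Union>i. A i \<inter> S)"
      using As S_sets d1 by (intro finite_measure_UNION) auto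
    moreover have "(\<lambda>i. prob (A i \<inter> S')) sums prob (\<Union>i. A i \<inter> S')"
      using As S'_sets d1 by (intro finite_measure_UNION) auto
    then have "(\<lambda>i. prob (A i \<inter> S') * K) sums (prob (\<Union>i. A i \<inter> S') * K)"
      by (rule sums_mult2)
    ultimately have "prob (\<Union>i. A i \<inter> S) = prob (\<Union>i. A i \<inter> S') * K"
      using IH by (simp add: sums_unique2)
    moreover have "(\<Union>i. A i \<inter> S) = (\<Union>i. A i) \<inter> S" "(\<Union>i. A i \<inter> S') = (\<Union>i. A i) \<inter> S'" by auto
    ultimately show "prob ((\<Union>i. A i) \<inter> S) = prob ((\<Union>i. A i) \<inter> S') * K" by simp
  qed
  interpret sfs: sigma_finite_subalgebra M F by (rule sfs)
  have "AE \<omega> in M. real_cond_exp M F (indicator S) \<omega> = indicator S' \<omega> * K"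
  proof (rule sfs.real_cond_exp_charact)
    fix A assume AF: "A \<in> sets F"
    then have AG: "A \<in> sigma_sets (space M) G" using F_sub by (auto simp: G_def)
    have As: "A \<in> sets M" using AF subalg by (auto simp: subalgebra_def)
    have "(\<lambda>x. indicator A x *\<^sub>R indicator S x) = (indicator (A \<inter> S) :: 'a \<Rightarrow> real)"
      by (auto simp: fun_eq_iff indicator_def)
    then have "(\<integral>x\<in>A. (indicator S x :: real) \<partial>M) = (\<integral>x. indicator (A \<inter> S) x \<partial>M)"
      by (simp add: set_lebesgue_integral_def)
    also have "\<dots> = prob (A \<inter> S)" using As S_sets by (simp add: Int_absorb2 sets.sets_into_space)
    also have "\<dots> = prob (A \<inter> S') * K" by (rule main[OF AG])
    also have "\<dots> = (\<integral>x. indicator (A \<inter> S') x * K \<partial>M)" using As S'_sets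
      by (simp add: Int_absorb2 sets.sets_into_space)
    also have "\<dots> = (\<integral>x\<in>A. indicator S' x * K \<partial>M)"
    proof -
      have eq: "(\<lambda>x. indicator A x *\<^sub>R (indicator S' x * K)) = (\<lambda>x. indicator (A \<inter> S') x * K :: real)"
        by (auto simp: fun_eq_iff indicator_def)
      show ?thesis unfolding set_lebesgue_integral_def by (rule arg_cong[where f="\<lambda>f. integral\<^sup>L M f", OF eq[symmetric]])
    qed
    finally show "(\<integral>x\<in>A. indicator S x \<partial>M) = (\<integral>x\<in>A. indicator S' x * K \<partial>M)" .
  next
    show "integrable M (indicator S :: 'a \<Rightarrow> real)" using S_sets by (simp add: emeasure_eq_measure)
    show "integrable M (\<lambda>x. indicator S' x * K)" using S'_sets by (simp add: emeasure_eq_measure)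
    show "(\<lambda>x. indicator S' x * K) \<in> borel_measurable F" using S'F by simp
  qed
  then show ?thesis by (simp add: S_def S'_def K_def)
qed


lemma Omega_Ev:
  assumes "(a, b) \<in> index_set T"
  shows "Omega_ev (space M) I T a b = Ev (min b T) (pat a b)"
proof -
  from assms consider "1 \<le> a" "a < b" "b \<le> T" | "1 \<le> a" "a \<le> T" "b = T + 1" | "a = T + 1" "b = T + 1"
    unfolding index_set_def by force
  then show ?thesis
  proof cases
    case 1
    then show ?thesis unfolding Omega_ev_def Ev_def pat_def
      by (auto simp: min_def)
  next
    case 2
    have "Omega_ev (space M) I T a b = {\<omega>\<in>space M. (\<forall>j<a. I j \<omega> = 1) \<and> (\<forall>j. a \<le> j \<and> j \<le> T \<longrightarrow> I j \<omega> = -1)}"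
      using 2 by (simp add: Omega_ev_def)
    also have "\<dots> = Ev (min b T) (pat a b)"
      unfolding Ev_def
    proof (intro Collect_cong conj_cong refl iffI allI impI)
      fix \<omega> j assume H: "(\<forall>j<a. I j \<omega> = 1) \<and> (\<forall>j. a \<le> j \<and> j \<le> T \<longrightarrow> I j \<omega> = -1)" and j: "j \<le> min b T"
      show "I j \<omega> = pat a b j"
      proof (cases "j < a")
        case True then show ?thesis using H by (simp add: pat_def)
      next
        case False then show ?thesis using H j 2 by (simp add: pat_def)
      qed
    next
      fix \<omega> assume H: "\<forall>j\<le>min b T. I j \<omega> = pat a b j"
      show "(\<forall>j<a. I j \<omega> = 1) \<and> (\<forall>j. a \<le> j \<and> j \<le> T \<longrightarrow> I j \<omega> = -1)"
      proof (intro conjI allI impI)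
        fix j assume "j < a" then show "I j \<omega> = 1" using H[rule_format, of j] 2 by (simp add: pat_def)
      next
        fix j assume "a \<le> j \<and> j \<le> T" then show "I j \<omega> = -1" using H[rule_format, of j] 2 by (simp add: pat_def)
      qed
    qed
    finally show ?thesis .
  next
    case 3
    have "Omega_ev (space M) I T a b = {\<omega>\<in>space M. \<forall>j\<le>T. I j \<omega> = 1}"
      using 3 by (simp add: Omega_ev_def)
    also have "\<dots> = Ev (min b T) (pat a b)"
      unfolding Ev_def using 3 by (simp add: pat_def)
    finally show ?thesis .
  qed
qed

lemma main_part:
  assumes ab: "(a, b) \<in> index_set T" and lm: "(l, m) \<in> index_set T"
  shows "AE \<omega> in M. \<omega> \<in> Omega_ev (space M) I T l m \<longrightarrow>
    real_cond_exp M (nat_aug_filtration M N k) (indicator (Omega_ev (space M) I T a b)) \<omega> =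
      ind (k < min l a \<or> (min l a \<le> k \<and> l = a \<and> (k < min m b \<or> (min m b \<le> k \<and> m = b)))) *
      (\<Prod>j\<in>{k+1..min b T}. if pat a b j = pat a b (j-1) then u_coef \<gamma> j else v_coef \<gamma> j)"
proof -
  have "AE \<omega> in M. real_cond_exp M F (indicator (Ev (min b T) (pat a b))) \<omega> =
     indicator (Ev (min (min b T) k) (pat a b)) \<omega> * (\<Prod>j\<in>{k+1..min b T}. if pat a b j = pat a b (j-1) then u_coef \<gamma> j else v_coef \<gamma> j)"
    by (rule condA) (auto simp: pat_def)
  then show ?thesis
  proof (rule eventually_mono)
    fix \<omega>
    assume eq: "real_cond_exp M F (indicator (Ev (min b T) (pat a b))) \<omega> =
     indicator (Ev (min (min b T) k) (pat a b)) \<omega> * (\<Prod>j\<in>{k+1..min b T}. if pat a b j = pat a b (j-1) then u_coef \<gamma> j else v_coef \<gamma> j)"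
    show "\<omega> \<in> Omega_ev (space M) I T l m \<longrightarrow>
    real_cond_exp M (nat_aug_filtration M N k) (indicator (Omega_ev (space M) I T a b)) \<omega> =
      ind (k < min l a \<or> (min l a \<le> k \<and> l = a \<and> (k < min m b \<or> (min m b \<le> k \<and> m = b)))) *
      (\<Prod>j\<in>{k+1..min b T}. if pat a b j = pat a b (j-1) then u_coef \<gamma> j else v_coef \<gamma> j)"
    proof
      assume "\<omega> \<in> Omega_ev (space M) I T l m"
      then have sp: "\<omega> \<in> space M" and J: "\<forall>j\<le>min m T. I j \<omega> = pat l m j"
        unfolding Omega_Ev[OF lm] by (auto simp: Ev_def)
      have "indicator (Ev (min (min b T) k) (pat a b)) \<omega> =
         ind (k < min l a \<or> (min l a \<le> k \<and> l = a \<and> (k < min m b \<or> (min m b \<le> k \<and> m = b))))"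
        using comb[OF lm ab kT J] sp by (simp add: Ev_def ind_def indicator_def)
      then show "real_cond_exp M (nat_aug_filtration M N k) (indicator (Omega_ev (space M) I T a b)) \<omega> =
      ind (k < min l a \<or> (min l a \<le> k \<and> l = a \<and> (k < min m b \<or> (min m b \<le> k \<and> m = b)))) *
      (\<Prod>j\<in>{k+1..min b T}. if pat a b j = pat a b (j-1) then u_coef \<gamma> j else v_coef \<gamma> j)"
        using eq unfolding Omega_Ev[OF ab] F_def by simp
    qed
  qed
qed

lemma main:
  assumes lm: "(l, m) \<in> index_set T"
  shows
   "(\<forall>a b. 1 \<le> a \<and> a < b \<and> b \<le> T \<longrightarrow>
      (AE \<omega> in M. \<omega> \<in> Omega_ev (space M) I T l m \<longrightarrow>
         real_cond_exp M (nat_aug_filtration M N k) (indicator (Omega_ev (space M) I T a b)) \<omega> =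
           (ind (k < min l a) + ind (k \<ge> min l a) * ind (l = a) *
              (ind (k < min m b) + ind (k \<ge> min m b) * ind (m = b))) *
           (ind (k \<ge> b)
            + ind (a \<le> k \<and> k < b) * (\<Prod>r\<in>{k+1..b-1}. u_coef \<gamma> r) * v_coef \<gamma> b
            + ind (k < a) * (\<Prod>r\<in>{k+1..a-1}. u_coef \<gamma> r) * v_coef \<gamma> a
                * (\<Prod>r\<in>{a+1..b-1}. u_coef \<gamma> r) * v_coef \<gamma> b)))
    \<and> (\<forall>a. 1 \<le> a \<and> a \<le> T \<longrightarrow>
      (AE \<omega> in M. \<omega> \<in> Omega_ev (space M) I T l m \<longrightarrow>
         real_cond_exp M (nat_aug_filtration M N k) (indicator (Omega_ev (space M) I T a (T+1))) \<omega> =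
           (ind (k < min l a) + ind (k \<ge> min l a) * ind (l = a) * ind (k < m)) *
           (ind (k \<ge> a) * (\<Prod>r\<in>{k+1..T}. u_coef \<gamma> r)
            + ind (k < a) * (\<Prod>r\<in>{k+1..a-1}. u_coef \<gamma> r) * v_coef \<gamma> a
                * (\<Prod>r\<in>{a+1..T}. u_coef \<gamma> r))))
    \<and> (AE \<omega> in M. \<omega> \<in> Omega_ev (space M) I T l m \<longrightarrow>
         real_cond_exp M (nat_aug_filtration M N k) (indicator (Omega_ev (space M) I T (T+1) (T+1))) \<omega> =
           ind (k < l) * (\<Prod>r\<in>{k+1..T}. u_coef \<gamma> r))"
proof (intro conjI allI impI)
  have lm': "l \<le> T + 1" "m \<le> T + 1" using lm by (auto simp: index_set_def)
  fix a b assume ab: "1 \<le> a \<and> a < b \<and> b \<le> T"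
  then have abI: "(a, b) \<in> index_set T" by (auto simp: index_set_def)
  have e1: "ind (k < min l a \<or> (min l a \<le> k \<and> l = a \<and> (k < min m b \<or> (min m b \<le> k \<and> m = b)))) =
    (ind (k < min l a) + ind (k \<ge> min l a) * ind (l = a) *
              (ind (k < min m b) + ind (k \<ge> min m b) * ind (m = b)))"
    by (auto simp: ind_def)
  have e2: "min b T = b" using ab by simp
  have e3: "(\<Prod>j\<in>{k+1..b}. if pat a b j = pat a b (j-1) then u_coef \<gamma> j else v_coef \<gamma> j) =
    ind (k \<ge> b) + ind (a \<le> k \<and> k < b) * (\<Prod>r\<in>{k+1..b-1}. u_coef \<gamma> r) * v_coef \<gamma> b
      + ind (k < a) * (\<Prod>r\<in>{k+1..a-1}. u_coef \<gamma> r) * v_coef \<gamma> a * (\<Prod>r\<in>{a+1..b-1}. u_coef \<gamma> r) * v_coef \<gamma> b"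
    by (rule prod1) (use ab in auto)
  show "AE \<omega> in M. \<omega> \<in> Omega_ev (space M) I T l m \<longrightarrow>
         real_cond_exp M (nat_aug_filtration M N k) (indicator (Omega_ev (space M) I T a b)) \<omega> =
           (ind (k < min l a) + ind (k \<ge> min l a) * ind (l = a) *
              (ind (k < min m b) + ind (k \<ge> min m b) * ind (m = b))) *
           (ind (k \<ge> b)
            + ind (a \<le> k \<and> k < b) * (\<Prod>r\<in>{k+1..b-1}. u_coef \<gamma> r) * v_coef \<gamma> b
            + ind (k < a) * (\<Prod>r\<in>{k+1..a-1}. u_coef \<gamma> r) * v_coef \<gamma> a
                * (\<Prod>r\<in>{a+1..b-1}. u_coef \<gamma> r) * v_coef \<gamma> b)"
    using main_part[OF abI lm] unfolding e1 e2 e3 .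
next
  have lm': "l \<le> T + 1" "m \<le> T + 1" using lm by (auto simp: index_set_def)
  fix a assume a: "1 \<le> a \<and> a \<le> T"
  then have abI: "(a, T+1) \<in> index_set T" by (auto simp: index_set_def)
  have e1: "ind (k < min l a \<or> (min l a \<le> k \<and> l = a \<and> (k < min m (T+1) \<or> (min m (T+1) \<le> k \<and> m = T+1)))) =
    (ind (k < min l a) + ind (k \<ge> min l a) * ind (l = a) * ind (k < m))"
    using lm' kT by (auto simp: ind_def)
  have e2: "min (T+1) T = T" by simp
  have e3: "(\<Prod>j\<in>{k+1..T}. if pat a (T+1) j = pat a (T+1) (j-1) then u_coef \<gamma> j else v_coef \<gamma> j) =
    ind (k \<ge> a) * (\<Prod>r\<in>{k+1..T}. u_coef \<gamma> r)
      + ind (k < a) * (\<Prod>r\<in>{k+1..a-1}. u_coef \<gamma> r) * v_coef \<gamma> a * (\<Prod>r\<in>{a+1..T}. u_coef \<gamma> r)"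
    by (rule prod2) (use a kT in auto)
  show "AE \<omega> in M. \<omega> \<in> Omega_ev (space M) I T l m \<longrightarrow>
         real_cond_exp M (nat_aug_filtration M N k) (indicator (Omega_ev (space M) I T a (T+1))) \<omega> =
           (ind (k < min l a) + ind (k \<ge> min l a) * ind (l = a) * ind (k < m)) *
           (ind (k \<ge> a) * (\<Prod>r\<in>{k+1..T}. u_coef \<gamma> r)
            + ind (k < a) * (\<Prod>r\<in>{k+1..a-1}. u_coef \<gamma> r) * v_coef \<gamma> a
                * (\<Prod>r\<in>{a+1..T}. u_coef \<gamma> r))"
    using main_part[OF abI lm] unfolding e1 e2 e3 .
next
  have lm': "l \<le> T + 1" "m \<le> T + 1" using lm by (auto simp: index_set_def)
  have abI: "(T+1, T+1) \<in> index_set T" by (auto simp: index_set_def)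
  have e1: "ind (k < min l (T+1) \<or> (min l (T+1) \<le> k \<and> l = T+1 \<and> (k < min m (T+1) \<or> (min m (T+1) \<le> k \<and> m = T+1)))) =
    ind (k < l)"
    using lm' kT by (auto simp: ind_def)
  have e2: "min (T+1) T = T" by simp
  show "AE \<omega> in M. \<omega> \<in> Omega_ev (space M) I T l m \<longrightarrow>
         real_cond_exp M (nat_aug_filtration M N k) (indicator (Omega_ev (space M) I T (T+1) (T+1))) \<omega> =
           ind (k < l) * (\<Prod>r\<in>{k+1..T}. u_coef \<gamma> r)"
    using main_part[OF abI lm] unfolding e1 e2 prod3 .
qed

end

theorem lemma5p9:
  fixes M :: "'a measure" and N :: "nat \<Rightarrow> 'a \<Rightarrow> int" and \<gamma> :: "nat \<Rightarrow> real"
    and T k l m :: nat and I :: "nat \<Rightarrow> 'a \<Rightarrow> real"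
  assumes "prob_space M"
    and "T \<ge> 1"
    and "\<And>j. j \<le> T \<Longrightarrow> N j \<in> measurable M (count_space UNIV)"
    and "\<And>\<omega>. \<omega> \<in> space M \<Longrightarrow> N 0 \<omega> = 0"
    and "\<And>j. j < T \<Longrightarrow> \<gamma> j \<ge> 0"
    and "prob_space.indep_vars M (\<lambda>_. count_space UNIV) (\<lambda>j \<omega>. N (Suc j) \<omega> - N j \<omega>) {0..<T}"
    and "\<And>j n. j < T \<Longrightarrow>
           measure M {\<omega> \<in> space M. N (Suc j) \<omega> - N j \<omega> = int n} = poisson_prob (\<gamma> j) n"
    and "I = (\<lambda>j \<omega>. (-1::real) powi (N j \<omega>))"
    and "k \<le> T"
    and "(l, m) \<in> index_set T"
  shows
   "(\<forall>a b. 1 \<le> a \<and> a < b \<and> b \<le> T \<longrightarrow>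
      (AE \<omega> in M. \<omega> \<in> Omega_ev (space M) I T l m \<longrightarrow>
         real_cond_exp M (nat_aug_filtration M N k) (indicator (Omega_ev (space M) I T a b)) \<omega> =
           (ind (k < min l a) + ind (k \<ge> min l a) * ind (l = a) *
              (ind (k < min m b) + ind (k \<ge> min m b) * ind (m = b))) *
           (ind (k \<ge> b)
            + ind (a \<le> k \<and> k < b) * (\<Prod>r\<in>{k+1..b-1}. u_coef \<gamma> r) * v_coef \<gamma> b
            + ind (k < a) * (\<Prod>r\<in>{k+1..a-1}. u_coef \<gamma> r) * v_coef \<gamma> a
                * (\<Prod>r\<in>{a+1..b-1}. u_coef \<gamma> r) * v_coef \<gamma> b)))
    \<and> (\<forall>a. 1 \<le> a \<and> a \<le> T \<longrightarrow>
      (AE \<omega> in M. \<omega> \<in> Omega_ev (space M) I T l m \<longrightarrow>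
         real_cond_exp M (nat_aug_filtration M N k) (indicator (Omega_ev (space M) I T a (T+1))) \<omega> =
           (ind (k < min l a) + ind (k \<ge> min l a) * ind (l = a) * ind (k < m)) *
           (ind (k \<ge> a) * (\<Prod>r\<in>{k+1..T}. u_coef \<gamma> r)
            + ind (k < a) * (\<Prod>r\<in>{k+1..a-1}. u_coef \<gamma> r) * v_coef \<gamma> a
                * (\<Prod>r\<in>{a+1..T}. u_coef \<gamma> r))))
    \<and> (AE \<omega> in M. \<omega> \<in> Omega_ev (space M) I T l m \<longrightarrow>
         real_cond_exp M (nat_aug_filtration M N k) (indicator (Omega_ev (space M) I T (T+1) (T+1))) \<omega> =
           ind (k < l) * (\<Prod>r\<in>{k+1..T}. u_coef \<gamma> r))"
  proof -
  have "setting M N \<gamma> T k (\<lambda>j \<omega>. N (Suc j) \<omega> - N j \<omega>) I"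
    unfolding setting_def setting_axioms_def using assms by auto
  then show ?thesis by (rule setting.main[OF _ assms(10)])
qed

end
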